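(* Let $(X,d)$ be a metric space and $\mu$ a non-atomic Borel measure on $X$. For every path $\gamma:[a,b]\to X$ in $\Gamma^\mu$ there is a unique map $\gamma_h:[0,h(\gamma)]\to X$ such that $\gamma=\gamma_h\circ\nu_\gamma$; moreover $\mathrm{Im}(\gamma)=\mathrm{Im}(\gamma_h)$ and $\nu_{\gamma_h}(t)=t$ for all $t\in[0,h(\gamma)]$ (so $\gamma_h=\gamma_h\circ\nu_{\gamma_h}$).
   Context: A path is a continuous map $\gamma:[a,b]\to X$; a subpath is a restriction to a subinterval, trivial if that interval is a point; $\mathrm{Im}(\gamma)=\gamma([a,b])$. $\mu$ non-atomic: $\mu(\{x\})=0$ for all $x\in X$. $\Gamma^\mu$ is the set of all non-trivial injective paths $\gamma$ in $X$ with $0<\mu(\mathrm{Im}(\tilde\gamma))<\infty$ for every non-trivial subpath $\tilde\gamma$ of $\gamma$. For $\gamma\in\Gamma^\mu$, $h(\gamma)=\mu(\mathrm{Im}(\gamma))$, and the $\mu$-arc length of $\gamma:[a,b]\to X$ is $\nu_\gamma:[a,b]\to\mathbb R$, $\nu_\gamma(x)=\mu(\gamma([a,x]))$. The map $\gamma_h$ is called the $\mu$-arc length parametrization of $\gamma$. *)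

theory Defs
  imports "HOL-Analysis.Analysis"
begin

text \<open>A path is a continuous map on a compact interval [a,b]; here represented by
  a function real => 'a together with the endpoints a and b.\<close>

definition nonatomic :: "'a measure \<Rightarrow> bool" where
  "nonatomic M \<longleftrightarrow> (\<forall>x. emeasure M {x} = 0)"

definition in_Gamma :: "'a::metric_space measure \<Rightarrow> real \<Rightarrow> real \<Rightarrow> (real \<Rightarrow> 'a) \<Rightarrow> bool" where
  "in_Gamma M a b \<gamma> \<longleftrightarrow>
     a < b \<and> continuous_on {a..b} \<gamma> \<and> inj_on \<gamma> {a..b} \<and>
     (\<forall>c d. a \<le> c \<longrightarrow> c < d \<longrightarrow> d \<le> b \<longrightarrow>
        0 < emeasure M (\<gamma> ` {c..d}) \<and> emeasure M (\<gamma> ` {c..d}) < \<infinity>)"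

definition hlen :: "'a measure \<Rightarrow> real \<Rightarrow> real \<Rightarrow> (real \<Rightarrow> 'a) \<Rightarrow> real" where
  "hlen M a b \<gamma> = measure M (\<gamma> ` {a..b})"

definition arclen :: "'a measure \<Rightarrow> real \<Rightarrow> (real \<Rightarrow> 'a) \<Rightarrow> real \<Rightarrow> real" where
  "arclen M a \<gamma> x = measure M (\<gamma> ` {a..x})"

end

theory Submission
  imports Defs
begin

locale gam =
  fixes M :: "'a::metric_space measure" and \<gamma> :: "real \<Rightarrow> 'a" and a b :: real
  assumes borel: "sets M = sets borel"
    and nonat: "nonatomic M"
    and G: "in_Gamma M a b \<gamma>"
begin

abbreviation "\<nu> \<equiv> arclen M a \<gamma>"

lemma ab: "a < b" and cont: "continuous_on {a..b} \<gamma>" and inj: "inj_on \<gamma> {a..b}"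
  and pos: "\<And>c d. a \<le> c \<Longrightarrow> c < d \<Longrightarrow> d \<le> b \<Longrightarrow> 0 < emeasure M (\<gamma> ` {c..d})"
  and fin: "\<And>c d. a \<le> c \<Longrightarrow> c < d \<Longrightarrow> d \<le> b \<Longrightarrow> emeasure M (\<gamma> ` {c..d}) < \<infinity>"
  using G by (auto simp: in_Gamma_def)

lemma sing0: "emeasure M {x} = 0" "measure M {x} = 0"
  using nonat by (auto simp: nonatomic_def measure_def)

lemma meas: "a \<le> c \<Longrightarrow> d \<le> b \<Longrightarrow> \<gamma> ` {c..d} \<in> sets M"
proof -
  assume "a \<le> c" "d \<le> b"
  then have "continuous_on {c..d} \<gamma>" by (intro continuous_on_subset[OF cont]) auto
  then have "compact (\<gamma> ` {c..d})" by (intro compact_continuous_image) auto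
  then have "closed (\<gamma> ` {c..d})" by (rule compact_imp_closed)
  then show ?thesis using borel by simp
qed

lemma fmeas: "a \<le> c \<Longrightarrow> d \<le> b \<Longrightarrow> \<gamma> ` {c..d} \<in> fmeasurable M"
proof -
  assume h: "a \<le> c" "d \<le> b"
  have "emeasure M (\<gamma> ` {c..d}) < \<infinity>"
  proof (cases "c < d")
    case True then show ?thesis using fin h by auto
  next
    case False
    then have "\<gamma> ` {c..d} = {} \<or> \<gamma> ` {c..d} = {\<gamma> c}" by (cases "c = d") auto
    then show ?thesis using sing0 by auto
  qed
  then show ?thesis using meas[OF h] by (auto simp: fmeasurable_def)
qed

lemma add: assumes "a \<le> x" "x \<le> y" "y \<le> b"
  shows "\<nu> y = \<nu> x + measure M (\<gamma> ` {x..y})"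
proof -
  have "{a..y} = {a..x} \<union> {x..y}" using assms by auto
  then have u: "\<gamma> ` {a..y} = \<gamma> ` {a..x} \<union> \<gamma> ` {x..y}" by (simp add: image_Un)
  have i: "\<gamma> ` {a..x} \<inter> \<gamma> ` {x..y} = {\<gamma> x}"
  proof
    show "\<gamma> ` {a..x} \<inter> \<gamma> ` {x..y} \<subseteq> {\<gamma> x}"
    proof
      fix z assume "z \<in> \<gamma> ` {a..x} \<inter> \<gamma> ` {x..y}"
      then obtain p q where "p \<in> {a..x}" "q \<in> {x..y}" "z = \<gamma> p" "z = \<gamma> q" by auto
      with inj assms have "p = q" by (auto simp: inj_on_def)
      then show "z \<in> {\<gamma> x}" using \<open>p \<in> {a..x}\<close> \<open>q \<in> {x..y}\<close> \<open>z = \<gamma> p\<close> by auto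
    qed
  qed (use assms in auto)
  show ?thesis unfolding arclen_def u
    using measure_Un3[OF fmeas fmeas, of a x x y] assms i sing0 by auto
qed

lemma nu_a: "\<nu> a = 0" using sing0 by (simp add: arclen_def)

lemma strict: "a \<le> x \<Longrightarrow> x < y \<Longrightarrow> y \<le> b \<Longrightarrow> \<nu> x < \<nu> y"
proof -
  assume h: "a \<le> x" "x < y" "y \<le> b"
  have "0 < measure M (\<gamma> ` {x..y})"
    using pos[OF h] fin[OF h] by (simp add: measure_def enn2real_positive_iff)
  then show ?thesis using add[of x y] h by auto
qed

lemma mono_nu: "a \<le> x \<Longrightarrow> x \<le> y \<Longrightarrow> y \<le> b \<Longrightarrow> \<nu> x \<le> \<nu> y"
  using strict[of x y] by (cases "x = y") auto

lemma nonneg: "a \<le> x \<Longrightarrow> x \<le> b \<Longrightarrow> 0 \<le> \<nu> x"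
  using mono_nu[of a x] nu_a by auto

lemma contnu: "continuous_on {a..b} \<nu>"
  unfolding continuous_on_iff
proof (intro ballI allI impI)
  fix x e :: real assume x: "x \<in> {a..b}" and e: "0 < e"
  define I where "I n = {max a (x - 1/(Suc n))..min b (x + 1/(Suc n))}" for n :: nat
  define A where "A n = \<gamma> ` I n" for n
  have dec: "decseq A" unfolding decseq_def A_def I_def
  proof (intro allI impI image_mono)
    fix m n :: nat assume "m \<le> n"
    then have "1/real (Suc n) \<le> 1/real (Suc m)" by (intro divide_left_mono) auto
    then show "{max a (x - 1/(Suc n))..min b (x + 1/(Suc n))} \<subseteq> {max a (x - 1/(Suc m))..min b (x + 1/(Suc m))}"
      by auto
  qed
  have rs: "range A \<subseteq> sets M" unfolding A_def I_def by (auto intro!: meas)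
  have fA: "emeasure M (A i) \<noteq> \<infinity>" for i
    using fmeas[of "max a (x - 1/(Suc i))" "min b (x + 1/(Suc i))"]
    unfolding A_def I_def by (auto simp: fmeasurable_def)
  have IX: "(\<Inter>n. I n) = {x}"
  proof
    show "(\<Inter>n. I n) \<subseteq> {x}"
    proof
      fix z assume z: "z \<in> (\<Inter>n. I n)"
      have zb: "\<bar>z - x\<bar> \<le> 1/(Suc n)" for n
      proof -
        have "z \<in> I n" using z by auto
        then show ?thesis by (auto simp: I_def abs_le_iff)
      qed
      have "\<bar>z - x\<bar> \<le> 0"
      proof (rule ccontr)
        assume "\<not> \<bar>z - x\<bar> \<le> 0"
        then obtain n where "inverse (real (Suc n)) < \<bar>z - x\<bar>"
          using reals_Archimedean[of "\<bar>z - x\<bar>"] by auto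
        then show False using zb[of n] by (simp add: inverse_eq_divide)
      qed
      then show "z \<in> {x}" by auto
    qed
  qed (use x in \<open>auto simp: I_def\<close>)
  have "(\<Inter>n. A n) = \<gamma> ` (\<Inter>n. I n)" unfolding A_def
    by (rule image_INT[symmetric, OF inj]) (auto simp: I_def)
  then have "(\<Inter>n. A n) = {\<gamma> x}" using IX by simp
  then have lim: "(\<lambda>n. measure M (A n)) \<longlonglongrightarrow> 0"
    using Lim_measure_decseq[OF rs dec fA] sing0 by simp
  then obtain n where n: "measure M (A n) < e" using e
    by (metis (no_types, lifting) abs_of_nonneg diff_zero LIMSEQ_D measure_nonneg real_norm_def order_refl)
  show "\<exists>d>0. \<forall>y\<in>{a..b}. dist y x < d \<longrightarrow> dist (\<nu> y) (\<nu> x) < e"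
  proof (intro exI[of _ "1/real (Suc n)"] conjI ballI impI)
    fix y assume y: "y \<in> {a..b}" "dist y x < 1/real (Suc n)"
    have sub: "{min x y..max x y} \<subseteq> I n" using y x by (auto simp: I_def dist_real_def)
    have "\<bar>\<nu> y - \<nu> x\<bar> = measure M (\<gamma> ` {min x y..max x y})"
      using add[of x y] add[of y x] x y by (cases "x \<le> y") auto
    also have "\<dots> \<le> measure M (A n)" unfolding A_def
      using sub x y fmeas[of "max a (x - 1/(Suc n))" "min b (x + 1/(Suc n))"] meas[of "min x y" "max x y"]
      by (intro measure_mono_fmeasurable image_mono) (auto simp: I_def)
    finally show "dist (\<nu> y) (\<nu> x) < e" using n by (simp add: dist_real_def)
  qed simp
qed

lemma img: assumes "x \<in> {a..b}" shows "\<nu> ` {a..x} = {0..\<nu> x}"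
proof
  show "\<nu> ` {a..x} \<subseteq> {0..\<nu> x}" using assms nonneg mono_nu by auto
  show "{0..\<nu> x} \<subseteq> \<nu> ` {a..x}"
  proof
    fix t assume t: "t \<in> {0..\<nu> x}"
    have "continuous_on {a..x} \<nu>" using assms by (intro continuous_on_subset[OF contnu]) auto
    then obtain z where "a \<le> z" "z \<le> x" "\<nu> z = t" using IVT'[of \<nu> a t x] t nu_a assms by auto
    then show "t \<in> \<nu> ` {a..x}" by auto
  qed
qed

end

theorem theorem2p2:
  fixes M :: "'a::metric_space measure" and \<gamma> :: "real \<Rightarrow> 'a" and a b :: real
  assumes borel: "sets M = sets borel"
    and nonat: "nonatomic M"
    and G: "in_Gamma M a b \<gamma>"
  shows "\<exists>g. (\<forall>x\<in>{a..b}. \<gamma> x = g (arclen M a \<gamma> x))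
            \<and> (\<forall>g'. (\<forall>x\<in>{a..b}. \<gamma> x = g' (arclen M a \<gamma> x)) \<longrightarrow>
                    (\<forall>t\<in>{0..hlen M a b \<gamma>}. g' t = g t))
            \<and> \<gamma> ` {a..b} = g ` {0..hlen M a b \<gamma>}
            \<and> (\<forall>t\<in>{0..hlen M a b \<gamma>}. arclen M 0 g t = t)"
proof -
  interpret gam M \<gamma> a b using assms by unfold_locales
  have injn: "inj_on \<nu> {a..b}"
    by (rule strict_mono_on_imp_inj_on) (auto simp: strict_mono_on_def intro: strict)
  have h: "hlen M a b \<gamma> = \<nu> b" by (simp add: hlen_def arclen_def)
  have imgb: "\<nu> ` {a..b} = {0..hlen M a b \<gamma>}" using img[of b] ab h by auto
  define g where "g t = \<gamma> (the_inv_into {a..b} \<nu> t)" for t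
  have g1: "\<forall>x\<in>{a..b}. \<gamma> x = g (\<nu> x)"
    unfolding g_def using the_inv_into_f_f[OF injn] by auto
  show ?thesis
  proof (intro exI[of _ g] conjI allI impI ballI)
    show "\<And>x. x \<in> {a..b} \<Longrightarrow> \<gamma> x = g (\<nu> x)" using g1 by auto
  next
    fix g' t assume g': "\<forall>x\<in>{a..b}. \<gamma> x = g' (\<nu> x)" and t: "t \<in> {0..hlen M a b \<gamma>}"
    then have "t \<in> \<nu> ` {a..b}" using imgb by simp
    then obtain x where "x \<in> {a..b}" "t = \<nu> x" by auto
    then show "g' t = g t" using g' g1 by auto
  next
    have "g ` {0..hlen M a b \<gamma>} = (g \<circ> \<nu>) ` {a..b}" by (simp add: imgb[symmetric] image_comp)
    also have "\<dots> = \<gamma> ` {a..b}" using g1 by (auto intro!: image_cong)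
    finally show "\<gamma> ` {a..b} = g ` {0..hlen M a b \<gamma>}" by simp
  next
    fix t assume t: "t \<in> {0..hlen M a b \<gamma>}"
    then have "t \<in> \<nu> ` {a..b}" using imgb by simp
    then obtain x where x: "x \<in> {a..b}" "t = \<nu> x" by auto
    have "g ` {0..t} = g ` (\<nu> ` {a..x})" using img[OF x(1)] x by simp
    also have "\<dots> = (g \<circ> \<nu>) ` {a..x}" by (simp add: image_comp)
    also have "\<dots> = \<gamma> ` {a..x}" using g1 x by (auto intro!: image_cong)
    finally show "arclen M 0 g t = t" using x by (simp add: arclen_def)
  qed
qed

end
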